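(* There is an absolute constant $K$ such that for all $0<p<q<1/2$, \[ \left|\frac{H_p(q)}{p\,h\!\left(\frac qp-1\right)}-1\right|\le K\,(p+q). \]
   Context: $H_p(q)=q\log\frac qp+(1-q)\log\frac{1-q}{1-p}$ is the Kullback–Leibler divergence between $\mathrm{Bern}(q)$ and $\mathrm{Bern}(p)$, and $h(x)=(x+1)\log(x+1)-x$. The paper states the bound as $O(p+q)$ with $p,q$ possibly depending on $n$. *)

theory Defs
  imports Complex_Main
begin

definition KL_bern :: "real \<Rightarrow> real \<Rightarrow> real" where
  "KL_bern p q = q * ln (q / p) + (1 - q) * ln ((1 - q) / (1 - p))"

definition hfun :: "real \<Rightarrow> real" where
  "hfun x = (x + 1) * ln (x + 1) - x"

end

theory Submission
  imports Defs
begin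

lemma ln_lower: fixes x :: real assumes "1 \<le> x" shows "2 * (x - 1) / (x + 1) \<le> ln x"
proof -
  let ?f = "\<lambda>x::real. ln x - 2 * (x - 1) / (x + 1)"
  have "?f 1 \<le> ?f x"
  proof (rule DERIV_nonneg_imp_nondecreasing[OF assms])
    fix t :: real assume t: "1 \<le> t" "t \<le> x"
    have d: "DERIV ?f t :> (1 / t - 4 / (t + 1)^2)"
      using t by (auto intro!: derivative_eq_intros simp: field_simps power2_eq_square)
    have t0: "t > 0" "t + 1 > 0" using t by auto
    have "1 / t - 4 / (t + 1)^2 = (t - 1)^2 / (t * (t+1)^2)"
      using t0 by (simp add: divide_simps) (simp add: algebra_simps power2_eq_square)
    also have "\<dots> \<ge> 0" using t by simp
    finally show "\<exists>y. DERIV ?f t :> y \<and> y \<ge> 0" using d by blast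
  qed
  then show ?thesis by simp
qed

theorem lemma5:
  shows "\<exists>K::real. \<forall>p q :: real. 0 < p \<and> p < q \<and> q < 1/2 \<longrightarrow>
           \<bar>KL_bern p q / (p * hfun (q / p - 1)) - 1\<bar> \<le> K * (p + q)"
proof (intro exI[of _ 2] allI impI)
  fix p q :: real assume H: "0 < p \<and> p < q \<and> q < 1/2"
  hence p: "0 < p" and pq: "p < q" and q: "q < 1/2" by auto
  define A where "A = q * ln (q / p) - q + p"
  define D where "D = (1 - q) * ln ((1 - q) / (1 - p)) + q - p"
  have hA: "p * hfun (q / p - 1) = A"
    using p by (simp add: hfun_def A_def field_simps)
  have KL: "KL_bern p q = A + D" by (simp add: KL_bern_def A_def D_def)
  have lnq: "2 * (q/p - 1) / (q/p + 1) \<le> ln (q/p)"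
    by (rule ln_lower) (use p pq in simp)
  have "2 * (q/p - 1) / (q/p + 1) = 2 * (q - p) / (q + p)" proof -
    have "q/p - 1 = (q - p)/p" "q/p + 1 = (q + p)/p" using p by (auto simp: field_simps)
    thus ?thesis using p pq by simp
  qed
  with lnq have lnq2: "2 * (q - p) / (q + p) \<le> ln (q/p)" by simp
  have "q * (2 * (q - p) / (q + p)) \<le> q * ln (q/p)"
    using lnq2 p pq by (intro mult_left_mono) auto
  hence "A \<ge> q * (2 * (q - p) / (q + p)) - q + p" by (simp add: A_def)
  moreover have "q * (2 * (q - p) / (q + p)) - q + p = (q - p)^2 / (q + p)"
    using p pq by (simp add: field_simps power2_eq_square)
  ultimately have Alow: "A \<ge> (q - p)^2 / (q + p)" by simp
  have Apos: "A > 0" using Alow p pq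
    by (smt (verit) divide_pos_pos zero_less_power)
  define y where "y = (1 - q) / (1 - p)"
  have ypos: "y > 0" using p pq q by (simp add: y_def)
  have "ln (1/y) \<le> 1/y - 1" using ypos by (intro ln_le_minus_one) simp
  hence "ln y \<ge> 1 - 1/y" using ypos by (simp add: ln_div)
  hence "(1 - q) * ln y \<ge> (1 - q) * (1 - 1/y)" using q by (intro mult_left_mono) auto
  moreover have "(1 - q) * (1 - 1/y) = p - q" using p pq q by (simp add: y_def field_simps)
  ultimately have D0: "D \<ge> 0" by (simp add: D_def y_def[symmetric])
  have "ln y \<le> y - 1" using ypos by (rule ln_le_minus_one)
  hence "(1 - q) * ln y \<le> (1 - q) * (y - 1)" using q by (intro mult_left_mono) auto
  moreover have "(1 - q) * (y - 1) + q - p = (q - p)^2 / (1 - p)"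
    using p pq q by (simp add: y_def field_simps power2_eq_square)
  ultimately have "D \<le> (q - p)^2 / (1 - p)" by (simp add: D_def y_def[symmetric])
  also have "\<dots> \<le> 2 * (q - p)^2" using p pq q by (simp add: field_simps)
  also have "\<dots> \<le> 2 * (q + p) * A"
  proof -
    have "(q - p)^2 \<le> (q + p) * A" using Alow p pq by (simp add: field_simps)
    thus ?thesis by (simp add: algebra_simps)
  qed
  finally have Dup: "D \<le> 2 * (p + q) * A" by (simp add: algebra_simps)
  have "KL_bern p q / (p * hfun (q / p - 1)) - 1 = D / A"
    using Apos by (simp add: hA KL field_simps)
  moreover have "D / A \<le> 2 * (p + q)" using Dup Apos by (simp add: divide_le_eq)
  ultimately show "\<bar>KL_bern p q / (p * hfun (q / p - 1)) - 1\<bar> \<le> 2 * (p + q)"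
    using D0 Apos by simp
qed

end
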